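(* Let $x_*$ be a feasible point of problem $(\mathcal{P})$ and $p\in\{1,\dots,d+1\}$. A $p$-point alternance exists at $x_*$ if and only if there exist $k_0\in\{1,\dots,p\}$, $i_0\in\{k_0,\dots,p\}$ and vectors $V_1,\dots,V_{k_0}\in\{\nabla_xf(x_*,\omega):\omega\in W(x_* )\}$, $V_{k_0+1},\dots,V_{i_0}\in\eta(x_* )$, $V_{i_0+1},\dots,V_p\in n_A(x_* )$ such that $\operatorname{rank}([V_1,\dots,V_p])=p-1$ and $\sum_{i=1}^p\beta_iV_i=0$ for some $\beta_i>0$, $i=1,\dots,p$. Furthermore, a collection $\{V_1,\dots,V_p\}$ of vectors of this form is a $p$-point alternance at $x_*$ if and only if $\operatorname{rank}([V_1,\dots,V_p])=p-1$ and $\sum_{i=1}^p\beta_iV_i=0$ for some $\beta_i>0$.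
   Context: Setting: $A\subseteq\mathbb{R}^d$ nonempty closed convex; $Y$ real Banach space with dual $Y^*$, pairing $\langle\cdot,\cdot\rangle$; $K\subset Y$ nonempty closed convex cone; $W$ compact Hausdorff; $f:\mathbb{R}^d\times W\to\mathbb{R}$ differentiable in $x$ with $f,\nabla_xf$ jointly continuous; $G:\mathbb{R}^d\to Y$ continuously Fréchet differentiable. $F(x)=\max_\omega f(x,\omega)$, $W(x)=\{\omega:f(x,\omega)=F(x)\}$; problem $(\mathcal{P})$: minimise $F$ s.t. $G(x)\in K$, $x\in A$. $K^*=\{y^*:\langle y^*,y\rangle\le0\ \forall y\in K\}$; $\mathcal{N}(x)=\{[DG(x)]^*\lambda:\lambda\in K^*,\langle\lambda,G(x)\rangle=0\}$ where $[DG(x)]^*\lambda\in\mathbb{R}^d$ satisfies $\langle[DG(x)]^*\lambda,h\rangle=\langle\lambda,DG(x)h\rangle$; $N_A(x)$ is the normal cone of convex analysis to $A$ at $x$. Fix $Z\subset\mathbb{R}^d$ consisting of $d$ linearly independent vectors, and sets $\eta(x_* )\subseteq\mathcal{N}(x_* )$, $n_A(x_* )\subseteq N_A(x_* )$ whose convex conic hulls are $\mathcal{N}(x_* )$ and $N_A(x_* )$. A $p$-point alternance exists at $x_*$ if there exist $k_0\in\{1,\dots,p\}$, $i_0\in\{k_0,\dots,p\}$, vectors $V_1,\dots,V_{k_0}\in\{\nabla_xf(x_*,\omega):\omega\in W(x_* )\}$, $V_{k_0+1},\dots,V_{i_0}\in\eta(x_* )$, $V_{i_0+1},\dots,V_p\in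 n_A(x_* )$ (ranges with upper index less than lower index are empty), and $V_{p+1},\dots,V_{d+1}\in Z$ such that the determinants $\Delta_s=\det[V_1,\dots,V_{s-1},V_{s+1},\dots,V_{d+1}]$ satisfy $\Delta_s\ne0$ for $s\le p$, $\operatorname{sign}\Delta_s=-\operatorname{sign}\Delta_{s+1}$ for $s\le p-1$, and $\Delta_s=0$ for $s\in\{p+1,\dots,d+1\}$; the collection $\{V_1,\dots,V_p\}$ is then called a $p$-point alternance at $x_*$. *)

theory Defs
  imports "HOL-Analysis.Analysis"
begin

definition maxfun :: "('x \<Rightarrow> 'w \<Rightarrow> real) \<Rightarrow> 'x \<Rightarrow> real" where
  "maxfun f x = (SUP \<omega>\<in>(UNIV::'w set). f x \<omega>)"

definition active_set :: "('x \<Rightarrow> 'w \<Rightarrow> real) \<Rightarrow> 'x \<Rightarrow> 'w set" where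
  "active_set f x = {\<omega>. f x \<omega> = maxfun f x}"

definition polar_cone :: "'y::real_normed_vector set \<Rightarrow> ('y \<Rightarrow>\<^sub>L real) set" where
  "polar_cone K = {l. \<forall>y\<in>K. blinfun_apply l y \<le> 0}"

definition constraint_normals ::
  "(real^'n \<Rightarrow> 'y::real_normed_vector) \<Rightarrow> (real^'n \<Rightarrow> ((real^'n) \<Rightarrow>\<^sub>L 'y)) \<Rightarrow> 'y set
   \<Rightarrow> real^'n \<Rightarrow> (real^'n) set" where
  "constraint_normals G DG K x =
     {v. \<exists>l\<in>polar_cone K. blinfun_apply l (G x) = 0 \<and>
          (\<forall>h. v \<bullet> h = blinfun_apply l (blinfun_apply (DG x) h))}"

definition normal_cone_cvx :: "(real^'n) set \<Rightarrow> real^'n \<Rightarrow> (real^'n) set" where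
  "normal_cone_cvx A x = {v. \<forall>a\<in>A. v \<bullet> (a - x) \<le> 0}"

definition convex_conic_hull :: "'a::real_vector set \<Rightarrow> 'a set" where
  "convex_conic_hull S = {v. \<exists>T c. finite T \<and> T \<subseteq> S \<and> (\<forall>u\<in>T. c u \<ge> 0) \<and>
                               v = (\<Sum>u\<in>T. c u *\<^sub>R u)}"

(* Fixed enumeration of the coordinate/column index type by {1..d}.
   (Any choice only changes all determinants by the same sign.) *)
definition pos_of :: "'n::finite \<Rightarrow> nat" where
  "pos_of = (SOME g. bij_betw g (UNIV::'n set) {1..CARD('n)})"

(* k-th column (k = 1..d) of the matrix [V_1,...,V_{s-1},V_{s+1},...,V_{d+1}] *)
definition col_index :: "nat \<Rightarrow> nat \<Rightarrow> nat" where
  "col_index s k = (if k < s then k else Suc k)"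

definition Delta :: "(nat \<Rightarrow> real^'n::finite) \<Rightarrow> nat \<Rightarrow> real" where
  "Delta V s = det (\<chi> i j. V (col_index s (pos_of j)) $ i)"

definition alternance_data ::
  "(real^'n::finite) set \<Rightarrow> (real^'n) set \<Rightarrow> (real^'n) set \<Rightarrow> (real^'n) set
   \<Rightarrow> nat \<Rightarrow> nat \<Rightarrow> nat \<Rightarrow> (nat \<Rightarrow> real^'n) \<Rightarrow> bool" where
  "alternance_data Grad eta nA Z p k0 i0 V \<longleftrightarrow>
     k0 \<in> {1..p} \<and> i0 \<in> {k0..p} \<and>
     (\<forall>i\<in>{1..k0}. V i \<in> Grad) \<and>
     (\<forall>i\<in>{k0+1..i0}. V i \<in> eta) \<and>
     (\<forall>i\<in>{i0+1..p}. V i \<in> nA) \<and>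
     (\<forall>i\<in>{p+1..CARD('n)+1}. V i \<in> Z) \<and>
     (\<forall>s\<in>{1..p}. Delta V s \<noteq> 0) \<and>
     (\<forall>s\<in>{1..p-1}. sgn (Delta V s) = - sgn (Delta V (s+1))) \<and>
     (\<forall>s\<in>{p+1..CARD('n)+1}. Delta V s = 0)"

definition alternance_exists ::
  "(real^'n::finite) set \<Rightarrow> (real^'n) set \<Rightarrow> (real^'n) set \<Rightarrow> (real^'n) set \<Rightarrow> nat \<Rightarrow> bool" where
  "alternance_exists Grad eta nA Z p \<longleftrightarrow> (\<exists>k0 i0 V. alternance_data Grad eta nA Z p k0 i0 V)"

definition is_alternance ::
  "(real^'n::finite) set \<Rightarrow> (real^'n) set \<Rightarrow> (real^'n) set \<Rightarrow> (real^'n) set \<Rightarrow> nat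
   \<Rightarrow> (nat \<Rightarrow> real^'n) \<Rightarrow> bool" where
  "is_alternance Grad eta nA Z p V \<longleftrightarrow>
     (\<exists>k0 i0 V'. (\<forall>i\<in>{1..p}. V' i = V i) \<and> alternance_data Grad eta nA Z p k0 i0 V')"

end

theory Submission
  imports Defs
begin


definition rel :: "(nat \<Rightarrow> real^'n::finite) \<Rightarrow> (nat \<Rightarrow> real) \<Rightarrow> bool" where
  "rel V g \<longleftrightarrow> (\<Sum>k\<in>{1..CARD('n)+1}. g k *\<^sub>R V k) = 0"

lemma pos_of_bij: "bij_betw (pos_of::'n::finite \<Rightarrow> nat) UNIV {1..CARD('n)}"
proof -
  have "\<exists>g. bij_betw g (UNIV::'n set) {1..CARD('n)}"
    by (rule finite_same_card_bij) auto
  then show ?thesis unfolding pos_of_def by (rule someI_ex)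
qed

lemma col_index_bij:
  assumes "s \<in> {1..D+1}"
  shows "bij_betw (col_index s) {1..D} ({1..D+1}-{s})"
proof (rule bij_betw_imageI)
  show "inj_on (col_index s) {1..D}"
    by (auto simp: inj_on_def col_index_def split: if_splits)
  show "col_index s ` {1..D} = {1..D+1}-{s}"
  proof
    show "col_index s ` {1..D} \<subseteq> {1..D+1}-{s}" using assms by (auto simp: col_index_def)
    show "{1..D+1}-{s} \<subseteq> col_index s ` {1..D}"
    proof
      fix m assume m: "m \<in> {1..D+1}-{s}"
      show "m \<in> col_index s ` {1..D}"
      proof (cases "m < s")
        case True
        then have "m = col_index s m" by (simp add: col_index_def)
        moreover have "m \<in> {1..D}" using m True assms by auto
        ultimately show ?thesis by blast
      next
        case False
        then have "m = col_index s (m-1)" using m by (auto simp add: col_index_def)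
        moreover have "m - 1 \<in> {1..D}" using m False assms by auto
        ultimately show ?thesis by blast
      qed
    qed
  qed
qed

lemma c_bij:
  assumes "s \<in> {1..CARD('n)+1}"
  shows "bij_betw (\<lambda>j::'n::finite. col_index s (pos_of j)) UNIV ({1..CARD('n)+1}-{s})"
  using bij_betw_trans[OF pos_of_bij col_index_bij[OF assms]] by (simp add: comp_def)

lemma Delta_rows: "Delta V s = det (\<chi> j. V (col_index s (pos_of j)))"
proof -
  have e: "(\<chi> i j. V (col_index s (pos_of j)) $ i) = transpose (\<chi> j. V (col_index s (pos_of j)))"
    by (simp add: transpose_def vec_eq_iff)
  show ?thesis unfolding Delta_def e by (rule det_transpose)
qed

lemma det_zero_iff_ker:
  fixes M :: "real^'n^'n"
  shows "det M = 0 \<longleftrightarrow> (\<exists>x. x \<noteq> 0 \<and> M *v x = 0)"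
proof -
  have lin: "linear ((*v) M)" by (rule matrix_vector_mul_linear)
  have "det M \<noteq> 0 \<longleftrightarrow> inj ((*v) M)"
    using det_nz_iff_inj[OF lin] by (simp add: matrix_of_matrix_vector_mul)
  also have "\<dots> \<longleftrightarrow> (\<forall>x. M *v x = 0 \<longrightarrow> x = 0)"
    using linear_injective_0[OF lin] by simp
  finally show ?thesis by blast
qed

lemma transpose_mult_sum:
  fixes r :: "'n::finite \<Rightarrow> real^'n"
  shows "transpose (\<chi> j. r j) *v x = (\<Sum>j\<in>UNIV. x $ j *\<^sub>R r j)"
  by (simp add: matrix_mult_sum row_def scalar_mult_eq_scaleR vec_lambda_eta)


lemma T1:
  fixes V :: "nat \<Rightarrow> real^'n::finite"
  assumes s: "s \<in> {1..CARD('n)+1}"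
  shows "Delta V s = 0 \<longleftrightarrow> (\<exists>g. rel V g \<and> g s = 0 \<and> (\<exists>k\<in>{1..CARD('n)+1}. g k \<noteq> 0))"
proof -
  let ?D = "CARD('n)"
  let ?c = "\<lambda>j::'n. col_index s (pos_of j)"
  let ?S = "{1..?D+1}-{s}"
  have cb: "bij_betw ?c UNIV ?S" by (rule c_bij[OF s])
  have sumeq: "(\<Sum>k\<in>{1..?D+1}. g k *\<^sub>R V k) = (\<Sum>j\<in>UNIV. g (?c j) *\<^sub>R V (?c j))" if "g s = 0" for g
  proof -
    have "(\<Sum>k\<in>{1..?D+1}. g k *\<^sub>R V k) = (\<Sum>k\<in>?S. g k *\<^sub>R V k)"
      using that by (intro sum.mono_neutral_right) auto
    also have "\<dots> = (\<Sum>j\<in>UNIV. g (?c j) *\<^sub>R V (?c j))"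
      using sum.reindex_bij_betw[OF cb, of "\<lambda>k. g k *\<^sub>R V k"] by simp
    finally show ?thesis .
  qed
  have "Delta V s = 0 \<longleftrightarrow> det (transpose (\<chi> j. V (?c j))) = 0" by (simp add: Delta_rows)
  also have "\<dots> \<longleftrightarrow> (\<exists>x. x \<noteq> 0 \<and> transpose (\<chi> j. V (?c j)) *v x = 0)" by (rule det_zero_iff_ker)
  also have "\<dots> \<longleftrightarrow> (\<exists>x. x \<noteq> 0 \<and> (\<Sum>j\<in>UNIV. x $ j *\<^sub>R V (?c j)) = 0)" by (simp only: transpose_mult_sum)
  also have "\<dots> \<longleftrightarrow> (\<exists>g. rel V g \<and> g s = 0 \<and> (\<exists>k\<in>{1..?D+1}. g k \<noteq> 0))"
  proof
    assume "\<exists>x. x \<noteq> 0 \<and> (\<Sum>j\<in>UNIV. x $ j *\<^sub>R V (?c j)) = 0"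
    then obtain x where x: "x \<noteq> 0" "(\<Sum>j\<in>UNIV. x $ j *\<^sub>R V (?c j)) = 0" by blast
    define g where "g k = (if k \<in> ?S then x $ (inv_into UNIV ?c k) else 0)" for k
    have ic: "inj ?c" using cb by (simp add: bij_betw_def)
    have gc: "g (?c j) = x $ j" for j
    proof -
      have "?c j \<in> ?S" using bij_betw_apply[OF cb UNIV_I] .
      then show ?thesis by (simp add: g_def inv_into_f_f[OF ic])
    qed
    have gs: "g s = 0" by (simp add: g_def)
    have "rel V g" unfolding rel_def sumeq[of g, OF gs] gc using x(2) .
    moreover obtain j where "x $ j \<noteq> 0" using x(1) by (auto simp: vec_eq_iff)
    then have "g (?c j) \<noteq> 0" "?c j \<in> {1..?D+1}" using gc bij_betw_apply[OF cb UNIV_I] by auto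
    ultimately show "\<exists>g. rel V g \<and> g s = 0 \<and> (\<exists>k\<in>{1..?D+1}. g k \<noteq> 0)" using gs by blast
  next
    assume "\<exists>g. rel V g \<and> g s = 0 \<and> (\<exists>k\<in>{1..?D+1}. g k \<noteq> 0)"
    then obtain g k where g: "rel V g" "g s = 0" "k \<in> {1..?D+1}" "g k \<noteq> 0" by blast
    define x where "x = (\<chi> j. g (?c j))"
    have "k \<in> ?S" using g by auto
    then have "k \<in> range ?c" using cb unfolding bij_betw_def by simp
    then obtain j where "k = ?c j" by blast
    then have "x \<noteq> 0" using g(4) by (auto simp: x_def vec_eq_iff)
    moreover have "(\<Sum>j\<in>UNIV. x $ j *\<^sub>R V (?c j)) = 0"
      using g(1) unfolding rel_def sumeq[of g, OF g(2)] x_def by simp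
    ultimately show "\<exists>x. x \<noteq> 0 \<and> (\<Sum>j\<in>UNIV. x $ j *\<^sub>R V (?c j)) = 0" by blast
  qed
  finally show ?thesis .
qed


lemma T2:
  fixes V :: "nat \<Rightarrow> real^'n::finite"
  assumes s: "s \<in> {1..CARD('n)}" and g: "rel V g"
  shows "g s * Delta V (s+1) + g (s+1) * Delta V s = 0"
proof -
  let ?D = "CARD('n)"
  let ?c = "\<lambda>j::'n. col_index s (pos_of j)"
  have s1: "s \<in> {1..?D+1}" using s by auto
  have cb: "bij_betw ?c UNIV ({1..?D+1}-{s})" by (rule c_bij[OF s1])
  have pb: "bij_betw (pos_of::'n \<Rightarrow> nat) UNIV {1..?D}" by (rule pos_of_bij)
  have ipos: "inj (pos_of::'n \<Rightarrow> nat)" and rpos: "range (pos_of::'n \<Rightarrow> nat) = {1..?D}"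
    using pb by (simp_all add: bij_betw_def)
  define j0 where "j0 = inv_into UNIV (pos_of::'n \<Rightarrow> nat) s"
  have j0: "pos_of j0 = s" unfolding j0_def using rpos s by (intro f_inv_into_f) simp
  have pj: "pos_of j \<noteq> s" if "j \<noteq> j0" for j
    using injD[OF ipos, of j j0] that j0 by auto
  define \<phi> where "\<phi> v = det (\<chi> j. if j = j0 then v else V (?c j))" for v
  have cj0: "?c j0 = s+1" using j0 by (simp add: col_index_def)
  have p1: "\<phi> (V (s+1)) = Delta V s"
    unfolding \<phi>_def Delta_rows by (intro arg_cong[where f=det] Cart_lambda_cong) (auto simp: cj0)
  have p2: "\<phi> (V s) = Delta V (s+1)"
    unfolding \<phi>_def Delta_rows
  proof (intro arg_cong[where f=det] Cart_lambda_cong)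
    fix x
    show "(if x = j0 then V s else V (?c x)) = V (col_index (s+1) (pos_of x))"
    proof (cases "x = j0")
      case True then show ?thesis by (simp add: j0 col_index_def)
    next
      case False then show ?thesis using pj[OF False] by (simp add: col_index_def)
    qed
  qed
  have p0: "\<phi> (V k) = 0" if k: "k \<in> {1..?D+1}" "k \<noteq> s" "k \<noteq> s+1" for k
  proof -
    have "k \<in> range ?c" using cb k unfolding bij_betw_def by simp
    then obtain j1 where j1: "?c j1 = k" by blast
    have "j1 \<noteq> j0" using j1 cj0 k by auto
    then show ?thesis unfolding \<phi>_def
      by (intro det_identical_rows[of j0 j1]) (simp_all add: row_def j1)
  qed
  have lin: "\<phi> (\<Sum>k\<in>T. g k *\<^sub>R V k) = (\<Sum>k\<in>T. g k * \<phi> (V k))" if "finite T" for T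
  proof -
    have "\<phi> (\<Sum>k\<in>T. g k *\<^sub>R V k) = (\<Sum>k\<in>T. det (\<chi> j. if j = j0 then g k *\<^sub>R V k else V (?c j)))"
      unfolding \<phi>_def by (rule det_linear_row_sum[OF that])
    also have "\<dots> = (\<Sum>k\<in>T. g k * \<phi> (V k))"
    proof (rule sum.cong[OF refl])
      fix k
      show "det (\<chi> j. if j = j0 then g k *\<^sub>R V k else V (?c j)) = g k * \<phi> (V k)"
        using det_row_mul[of j0 "g k" "\<lambda>_. V k" "\<lambda>j. V (?c j)"]
        unfolding \<phi>_def scalar_mult_eq_scaleR .
    qed
    finally show ?thesis .
  qed
  have "0 = \<phi> 0" unfolding \<phi>_def using det_row_0[of j0 "\<lambda>j. V (?c j)"] by (rule sym)
  also have "\<phi> 0 = \<phi> (\<Sum>k\<in>{1..?D+1}. g k *\<^sub>R V k)" using g by (simp add: rel_def)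
  also have "\<dots> = (\<Sum>k\<in>{1..?D+1}. g k * \<phi> (V k))" by (rule lin) simp
  also have "\<dots> = (\<Sum>k\<in>{s, s+1}. g k * \<phi> (V k))"
    using s p0 by (intro sum.mono_neutral_right) auto
  also have "\<dots> = g s * Delta V (s+1) + g (s+1) * Delta V s" using p1 p2 by simp
  finally show ?thesis by simp
qed



lemma rel_comb:
  assumes "rel V g" "rel V h"
  shows "rel V (\<lambda>k. g k - c * h k)"
proof -
  let ?I = "{1..CARD('a)+1}"
  have "(\<Sum>k\<in>?I. (g k - c * h k) *\<^sub>R V k) = (\<Sum>k\<in>?I. g k *\<^sub>R V k - c *\<^sub>R (h k *\<^sub>R V k))"
    by (intro sum.cong refl) (simp add: scaleR_diff_left)
  also have "\<dots> = (\<Sum>k\<in>?I. g k *\<^sub>R V k) - c *\<^sub>R (\<Sum>k\<in>?I. h k *\<^sub>R V k)"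
    by (simp only: sum_subtractf scaleR_sum_right)
  finally have "(\<Sum>k\<in>?I. (g k - c * h k) *\<^sub>R V k) = (\<Sum>k\<in>?I. g k *\<^sub>R V k) - c *\<^sub>R (\<Sum>k\<in>?I. h k *\<^sub>R V k)" .
  then show ?thesis using assms unfolding rel_def by simp
qed

lemma rel_scale:
  assumes "rel V g"
  shows "rel V (\<lambda>k. c * g k)"
  using rel_comb[of V "\<lambda>_. 0" g "-c"] assms by (simp add: rel_def)

lemma uniq1_iff:
  fixes V :: "nat \<Rightarrow> real^'n::finite"
  shows "Delta V 1 \<noteq> 0 \<longleftrightarrow> (\<forall>h. rel V h \<and> h 1 = 0 \<longrightarrow> (\<forall>k\<in>{1..CARD('n)+1}. h k = 0))"
  using T1[of 1 V] by auto

lemma proportional: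
  fixes V :: "nat \<Rightarrow> real^'n::finite"
  assumes u: "Delta V 1 \<noteq> 0" and g: "rel V g" "g 1 \<noteq> 0" and h: "rel V h"
  shows "\<forall>k\<in>{1..CARD('n)+1}. h k = (h 1 / g 1) * g k"
proof -
  have "rel V (\<lambda>k. h k - (h 1 / g 1) * g k)" by (rule rel_comb[OF h g(1)])
  moreover have "h 1 - (h 1 / g 1) * g 1 = 0" using g(2) by simp
  moreover have U: "\<forall>h. rel V h \<and> h 1 = 0 \<longrightarrow> (\<forall>k\<in>{1..CARD('n)+1}. h k = 0)"
    using u by (simp only: uniq1_iff)
  ultimately have "\<forall>k\<in>{1..CARD('n)+1}. h k - (h 1 / g 1) * g k = 0"
    using U[rule_format, of "\<lambda>k. h k - (h 1 / g 1) * g k"] by blast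
  then show ?thesis by (simp only: right_minus_eq)
qed

lemma indep_idx:
  fixes W :: "nat \<Rightarrow> 'a::real_vector"
  assumes fin: "finite I"
  shows "(\<forall>h. (\<Sum>k\<in>I. h k *\<^sub>R W k) = 0 \<longrightarrow> (\<forall>k\<in>I. h k = 0)) \<longleftrightarrow> inj_on W I \<and> independent (W ` I)"
proof
  assume H: "\<forall>h. (\<Sum>k\<in>I. h k *\<^sub>R W k) = 0 \<longrightarrow> (\<forall>k\<in>I. h k = 0)"
  show "inj_on W I \<and> independent (W ` I)"
  proof
    show "inj_on W I"
    proof (rule inj_onI, rule ccontr)
      fix i j assume ij: "i \<in> I" "j \<in> I" "W i = W j" "i \<noteq> j"
      define h where "h k = (if k = i then 1 else if k = j then -1 else (0::real))" for k
      have "h k *\<^sub>R W k = (if k = i then W k else 0) - (if k = j then W k else 0)" for k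
        using ij by (auto simp: h_def)
      then have "(\<Sum>k\<in>I. h k *\<^sub>R W k) = W i - W j"
        using ij fin by (simp add: sum_subtractf)
      then have "h i = 0" using H ij by auto
      then show False by (simp add: h_def)
    qed
    then have inj: "inj_on W I" .
    show "independent (W ` I)"
    proof
      assume "dependent (W ` I)"
      then obtain u v where uv: "v \<in> W ` I" "u v \<noteq> 0" "(\<Sum>v\<in>W ` I. u v *\<^sub>R v) = 0"
        using dependent_finite[of "W ` I"] fin by auto
      have "(\<Sum>k\<in>I. u (W k) *\<^sub>R W k) = 0"
        using uv(3) sum.reindex[OF inj, of "\<lambda>v. u v *\<^sub>R v"] by simp
      then have "\<forall>k\<in>I. u (W k) = 0" using spec[OF H, of "\<lambda>k. u (W k)"] by simp
      then show False using uv by auto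
    qed
  qed
next
  assume A: "inj_on W I \<and> independent (W ` I)"
  show "\<forall>h. (\<Sum>k\<in>I. h k *\<^sub>R W k) = 0 \<longrightarrow> (\<forall>k\<in>I. h k = 0)"
  proof (intro allI impI)
    fix h assume hs: "(\<Sum>k\<in>I. h k *\<^sub>R W k) = 0"
    define u where "u v = h (the_inv_into I W v)" for v
    have uW: "u (W k) = h k" if "k \<in> I" for k
      using A that by (simp add: u_def the_inv_into_f_f)
    have "(\<Sum>v\<in>W ` I. u v *\<^sub>R v) = (\<Sum>k\<in>I. u (W k) *\<^sub>R W k)"
      using A sum.reindex[of W I "\<lambda>v. u v *\<^sub>R v"] by simp
    also have "\<dots> = (\<Sum>k\<in>I. h k *\<^sub>R W k)" using uW by (intro sum.cong) auto
    finally have "(\<Sum>v\<in>W ` I. u v *\<^sub>R v) = 0" using hs by simp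
    then have "\<forall>v\<in>W ` I. u v = 0"
      using A dependent_finite[of "W ` I"] fin by auto
    then show "\<forall>k\<in>I. h k = 0" using uW by auto
  qed
qed

lemma sign_lemma1:
  fixes a b x y :: real
  assumes "a > 0" "x \<noteq> 0" "y \<noteq> 0" "sgn x = - sgn y" "a * y + b * x = 0"
  shows "b > 0"
proof (cases "x > 0")
  case True
  then have "y < 0" using assms by (auto simp: sgn_if split: if_splits)
  then have "a * y < 0" using assms(1) by (simp add: mult_pos_neg)
  then have "b * x > 0" using assms(5) by linarith
  then show ?thesis using True by (simp add: zero_less_mult_iff)
next
  case False
  then have "x < 0" using assms(2) by linarith
  then have "y > 0" using assms by (auto simp: sgn_if split: if_splits)
  then have "a * y > 0" using assms(1) by simp
  then have "b * x < 0" using assms(5) by linarith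
  then show ?thesis using \<open>x < 0\<close> by (simp add: mult_less_0_iff)
qed

lemma sign_lemma2:
  fixes a b x y :: real
  assumes "a > 0" "b > 0" "x \<noteq> 0" "y \<noteq> 0" "a * y + b * x = 0"
  shows "sgn x = - sgn y"
proof (cases "x > 0")
  case True
  then have "b * x > 0" using assms by simp
  then have "a * y < 0" using assms(5) by linarith
  then have "y < 0" using assms(1) by (simp add: mult_less_0_iff)
  then show ?thesis using True by simp
next
  case False
  then have "x < 0" using assms(3) by linarith
  then have "b * x < 0" using assms(2) by (simp add: mult_pos_neg)
  then have "a * y > 0" using assms(5) by linarith
  then have "y > 0" using assms(1) by (simp add: zero_less_mult_iff)
  then show ?thesis using \<open>x < 0\<close> by simp
qed

lemma fwd:
  fixes V :: "nat \<Rightarrow> real^'n::finite"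
  assumes p: "p \<in> {1..CARD('n)+1}"
    and nz: "\<forall>s\<in>{1..p}. Delta V s \<noteq> 0"
    and sg: "\<forall>s\<in>{1..p-1}. sgn (Delta V s) = - sgn (Delta V (s+1))"
    and z: "\<forall>s\<in>{p+1..CARD('n)+1}. Delta V s = 0"
  shows "dim (span (V ` {1..p})) = p - 1 \<and>
         (\<exists>\<beta>. (\<forall>i\<in>{1..p}. \<beta> i > 0) \<and> (\<Sum>i=1..p. \<beta> i *\<^sub>R V i) = 0)"
proof -
  let ?D = "CARD('n)"
  let ?I = "{1..?D+1}"
  have u1: "Delta V 1 \<noteq> 0" using nz p by auto
  have U: "\<forall>h. rel V h \<and> h 1 = 0 \<longrightarrow> (\<forall>k\<in>?I. h k = 0)" using u1 unfolding uniq1_iff .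
  have "\<exists>g. rel V g \<and> (\<exists>k\<in>?I. g k \<noteq> 0)"
  proof (rule ccontr)
    assume "\<not> ?thesis"
    then have "\<forall>h. (\<Sum>k\<in>?I. h k *\<^sub>R V k) = 0 \<longrightarrow> (\<forall>k\<in>?I. h k = 0)"
      unfolding rel_def by blast
    then have ii: "inj_on V ?I \<and> independent (V ` ?I)" using indep_idx[of ?I V] by simp
    then have "card (V ` ?I) = ?D + 1" by (simp add: card_image)
    then have "dependent (V ` ?I)" by (intro dependent_biggerset) simp
    then show False using ii by blast
  qed
  then obtain g0 k0 where g0: "rel V g0" "k0 \<in> ?I" "g0 k0 \<noteq> 0" by blast
  have g01: "g0 1 \<noteq> 0" using U g0 by blast
  define g where "g k = g0 k / g0 1" for k
  have g: "rel V g" using rel_scale[OF g0(1), of "1 / g0 1"] unfolding g_def by simp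
  have g1: "g 1 = 1" using g01 by (simp add: g_def)
  have pos: "s \<in> {1..p} \<longrightarrow> g s > 0" for s
  proof (induction s)
    case 0 then show ?case by simp
  next
    case (Suc s)
    show ?case
    proof (cases "s = 0")
      case True then show ?thesis using g1 by simp
    next
      case False
      show ?thesis
      proof
        assume "Suc s \<in> {1..p}"
        then have s: "s \<in> {1..p-1}" using False by auto
        then have gs: "g s > 0" using Suc by auto
        have sD: "s \<in> {1..?D}" using s p by auto
        have "g s * Delta V (s+1) + g (s+1) * Delta V s = 0" by (rule T2[OF sD g])
        moreover have "Delta V s \<noteq> 0" "Delta V (s+1) \<noteq> 0" using nz s by auto
        moreover have "sgn (Delta V s) = - sgn (Delta V (s+1))" using sg s by auto
        ultimately have "g (s+1) > 0" using sign_lemma1[OF gs, of "Delta V s" "Delta V (s+1)" "g (s+1)"] by blast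
        then show "g (Suc s) > 0" by simp
      qed
    qed
  qed
  have zero: "g k = 0" if k: "k \<in> {p+1..?D+1}" for k
  proof -
    have "k \<in> ?I" using k p by auto
    then obtain h m where h: "rel V h" "h k = 0" "m \<in> ?I" "h m \<noteq> 0"
      using T1[of k V] z k by auto
    have hp: "\<forall>m\<in>?I. h m = (h 1 / g 1) * g m" by (rule proportional[OF u1 g _ h(1)]) (unfold g1, simp)
    then have hp': "\<forall>m\<in>?I. h m = h 1 * g m" unfolding g1 by (simp only: div_by_1)
    have "h 1 \<noteq> 0" using hp'[rule_format, OF h(3)] h(4) by auto
    then show ?thesis using hp'[rule_format, OF \<open>k \<in> ?I\<close>] h(2) by simp
  qed
  have sum0: "(\<Sum>i=1..p. g i *\<^sub>R V i) = 0"
  proof -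
    have "(\<Sum>i=1..p. g i *\<^sub>R V i) = (\<Sum>i\<in>?I. g i *\<^sub>R V i)"
      using p zero by (intro sum.mono_neutral_left) auto
    then show ?thesis using g unfolding rel_def by simp
  qed
  let ?B = "V ` {2..p}"
  have "\<forall>h. (\<Sum>k\<in>{2..p}. h k *\<^sub>R V k) = 0 \<longrightarrow> (\<forall>k\<in>{2..p}. h k = 0)"
  proof (intro allI impI)
    fix h assume hs: "(\<Sum>k\<in>{2..p}. h k *\<^sub>R V k) = 0"
    define h' where "h' k = (if k \<in> {2..p} then h k else 0)" for k
    have "(\<Sum>k\<in>?I. h' k *\<^sub>R V k) = (\<Sum>k\<in>{2..p}. h' k *\<^sub>R V k)"
      using p by (intro sum.mono_neutral_right) (auto simp: h'_def)
    also have "\<dots> = (\<Sum>k\<in>{2..p}. h k *\<^sub>R V k)" by (intro sum.cong) (auto simp: h'_def)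
    finally have "rel V h'" using hs unfolding rel_def by simp
    moreover have "h' 1 = 0" by (simp add: h'_def)
    ultimately have H0: "\<forall>k\<in>?I. h' k = 0" using U by blast
    show "\<forall>k\<in>{2..p}. h k = 0"
    proof (intro ballI)
      fix k assume k: "k \<in> {2..p}"
      then have "k \<in> ?I" using p by auto
      then have "h' k = 0" using H0 by blast
      then show "h k = 0" using k by (simp add: h'_def)
    qed
  qed
  then have Bi: "inj_on V {2..p} \<and> independent ?B" using indep_idx[of "{2..p}" V] by simp
  have V1: "V 1 \<in> span ?B"
  proof -
    have "{1..p} = insert 1 {2..p}" using p by auto
    then have "(\<Sum>i=1..p. g i *\<^sub>R V i) = g 1 *\<^sub>R V 1 + (\<Sum>i=2..p. g i *\<^sub>R V i)" by simp
    then have "V 1 = - (\<Sum>i=2..p. g i *\<^sub>R V i)" using sum0 g1 by (simp add: eq_neg_iff_add_eq_0)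
    moreover have "(\<Sum>i=2..p. g i *\<^sub>R V i) \<in> span ?B"
      by (intro span_sum span_mul span_base) auto
    ultimately show ?thesis by (simp add: span_neg)
  qed
  have "{1..p} = insert 1 {2..p}" using p by auto
  then have "V ` {1..p} = insert (V 1) ?B" by simp
  then have "span (V ` {1..p}) = span ?B" using V1 by (simp add: span_redundant)
  then have "dim (span (V ` {1..p})) = card ?B" using Bi by (simp add: dim_span_eq_card_independent dim_eq_card_independent)
  also have "\<dots> = p - 1" using Bi by (simp add: card_image)
  finally show ?thesis using pos sum0 by blast
qed

lemma bwd:
  fixes V :: "nat \<Rightarrow> real^'n::finite" and Z :: "(real^'n) set"
  assumes p: "p \<in> {1..CARD('n)+1}"
    and Zi: "independent Z" and Zc: "card Z = CARD('n)"
    and dimV: "dim (span (V ` {1..p})) = p - 1"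
    and bpos: "\<forall>i\<in>{1..p}. \<beta> i > 0" and bsum: "(\<Sum>i=1..p. \<beta> i *\<^sub>R V i) = 0"
  shows "\<exists>V'. (\<forall>i\<in>{1..p}. V' i = V i) \<and> (\<forall>i\<in>{p+1..CARD('n)+1}. V' i \<in> Z) \<and>
     (\<forall>s\<in>{1..p}. Delta V' s \<noteq> 0) \<and>
     (\<forall>s\<in>{1..p-1}. sgn (Delta V' s) = - sgn (Delta V' (s+1))) \<and>
     (\<forall>s\<in>{p+1..CARD('n)+1}. Delta V' s = 0)"
proof -
  let ?D = "CARD('n)"
  let ?I = "{1..?D+1}"
  let ?B = "V ` {2..p}"
  have b1: "\<beta> 1 > 0" using bpos p by auto
  have V1: "V 1 \<in> span ?B"
  proof -
    have S: "(\<Sum>i=2..p. \<beta> i *\<^sub>R V i) \<in> span ?B" by (intro span_sum span_mul span_base) auto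
    have "{1..p} = insert 1 {2..p}" using p by auto
    then have "\<beta> 1 *\<^sub>R V 1 + (\<Sum>i=2..p. \<beta> i *\<^sub>R V i) = 0" using bsum by simp
    then have eq: "\<beta> 1 *\<^sub>R V 1 = - (\<Sum>i=2..p. \<beta> i *\<^sub>R V i)" by (simp add: eq_neg_iff_add_eq_0)
    have e: "V 1 = (1 / \<beta> 1) *\<^sub>R (\<beta> 1 *\<^sub>R V 1)" using b1 by simp
    show ?thesis by (subst e, unfold eq) (intro span_mul span_neg S)
  qed
  have "{1..p} = insert 1 {2..p}" using p by auto
  then have "V ` {1..p} = insert (V 1) ?B" by simp
  then have spanB: "span (V ` {1..p}) = span ?B" using V1 by (simp add: span_redundant)
  have dimB: "dim ?B = p - 1" using dimV spanB by (metis dim_span)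
  have finB: "finite ?B" by simp
  have cB: "card ?B \<le> p - 1" using card_image_le[of "{2..p}" V] by simp
  have "dim ?B \<le> card ?B" by (rule dim_le_card'[OF finB])
  then have cB': "card ?B = p - 1" using cB dimB by simp
  have "independent ?B \<longleftrightarrow> ?B \<subseteq> span ?B"
    by (rule card_eq_dim[OF order_refl]) (use cB' dimB in simp_all)
  then have indB: "independent ?B" using span_superset[of ?B] by blast
  have injB: "inj_on V {2..p}" using cB' by (intro eq_card_imp_inj_on) auto
  have "dim Z = DIM(real^'n)" using dim_eq_card_independent[OF Zi] Zc by simp
  then have spZ: "span Z = UNIV" by (simp only: dim_eq_full)
  obtain B' where B': "?B \<subseteq> B'" "B' \<subseteq> ?B \<union> Z" "independent B'" "?B \<union> Z \<subseteq> span B'"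
    using maximal_independent_subset_extend[of ?B "?B \<union> Z"] indB by blast
  have "span Z \<subseteq> span B'" using B'(4) by (intro span_minimal subspace_span) auto
  then have spB': "span B' = UNIV" using spZ by auto
  have finB': "finite B'" using B'(3) by (rule finiteI_independent)
  have cB'': "card B' = ?D"
    using dim_eq_card_independent[OF B'(3)] spB' dim_eq_full[of B'] by simp
  define E where "E = B' - ?B"
  have EZ: "E \<subseteq> Z" using B'(2) by (auto simp: E_def)
  have cE: "card E = ?D + 1 - p"
    using card_Diff_subset[OF finB B'(1)] cB'' cB' p by (simp add: E_def)
  have "card {p+1..?D+1} = card E" using cE by simp
  moreover have "finite E" using finB' by (simp add: E_def)
  ultimately obtain e where e: "bij_betw e {p+1..?D+1} E"
    using finite_same_card_bij[of "{p+1..?D+1}" E] by blast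
  define V' where "V' i = (if i \<in> {p+1..?D+1} then e i else V i)" for i
  have V'1: "\<forall>i\<in>{1..p}. V' i = V i" by (auto simp: V'_def)
  have V'Z: "\<forall>i\<in>{p+1..?D+1}. V' i \<in> Z" using e EZ by (auto simp: V'_def bij_betw_def)
  have split: "{2..?D+1} = {p+1..?D+1} \<union> {2..p}" using p by auto
  have im1: "V' ` {p+1..?D+1} = E"
  proof -
    have "V' ` {p+1..?D+1} = e ` {p+1..?D+1}" by (intro image_cong) (auto simp: V'_def)
    then show ?thesis using e by (simp add: bij_betw_def)
  qed
  have im2: "V' ` {2..p} = ?B" by (intro image_cong) (auto simp: V'_def)
  have img: "V' ` {2..?D+1} = B'"
    unfolding split image_Un im1 im2 E_def using B'(1) by auto
  have injV': "inj_on V' {2..?D+1}"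
  proof -
    have "inj_on (\<lambda>x. if x \<in> {p+1..?D+1} then e x else V x) ({p+1..?D+1} \<union> {2..p})"
    proof (rule inj_on_disjoint_Un)
      show "inj_on e {p+1..?D+1}" using e by (simp add: bij_betw_def)
      show "inj_on V {2..p}" by (rule injB)
      show "e ` {p+1..?D+1} \<inter> V ` {2..p} = {}" using e by (auto simp: bij_betw_def E_def)
    qed
    then show ?thesis unfolding split V'_def .
  qed
  have indI: "\<forall>h. (\<Sum>k\<in>{2..?D+1}. h k *\<^sub>R V' k) = 0 \<longrightarrow> (\<forall>k\<in>{2..?D+1}. h k = 0)"
    using indep_idx[of "{2..?D+1}" V'] injV' img B'(3) by simp
  have U': "\<forall>h. rel V' h \<and> h 1 = 0 \<longrightarrow> (\<forall>k\<in>?I. h k = 0)"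
  proof (intro allI impI)
    fix h assume h: "rel V' h \<and> h 1 = 0"
    have I: "?I = insert 1 {2..?D+1}" by auto
    have e: "(\<Sum>k\<in>?I. h k *\<^sub>R V' k) = h 1 *\<^sub>R V' 1 + (\<Sum>k\<in>{2..?D+1}. h k *\<^sub>R V' k)"
      by (simp only: I, rule sum.insert) auto
    have r: "(\<Sum>k\<in>?I. h k *\<^sub>R V' k) = 0" using h by (simp only: rel_def)
    have z1: "h 1 *\<^sub>R V' 1 = 0" using h by simp
    have "(\<Sum>k\<in>{2..?D+1}. h k *\<^sub>R V' k) = 0"
      using e r z1 by (metis add.left_neutral)
    then have "\<forall>k\<in>{2..?D+1}. h k = 0" using indI by blast
    then show "\<forall>k\<in>?I. h k = 0" using h I by auto
  qed
  have D1: "Delta V' 1 \<noteq> 0" using U' unfolding uniq1_iff .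
  define bt where "bt k = (if k \<in> {1..p} then \<beta> k else 0)" for k
  have relb: "rel V' bt"
  proof -
    have "(\<Sum>k\<in>?I. bt k *\<^sub>R V' k) = (\<Sum>k\<in>{1..p}. bt k *\<^sub>R V' k)"
      using p by (intro sum.mono_neutral_right) (auto simp: bt_def)
    also have "\<dots> = (\<Sum>k\<in>{1..p}. \<beta> k *\<^sub>R V k)" using V'1 by (intro sum.cong) (auto simp: bt_def)
    finally show ?thesis using bsum unfolding rel_def by simp
  qed
  have bt1: "bt 1 \<noteq> 0" using b1 p by (simp add: bt_def)
  have nz: "\<forall>s\<in>{1..p}. Delta V' s \<noteq> 0"
  proof (intro ballI notI)
    fix s assume s: "s \<in> {1..p}" and d: "Delta V' s = 0"
    have sI: "s \<in> ?I" using s p by auto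
    obtain h m where h: "rel V' h" "h s = 0" "m \<in> ?I" "h m \<noteq> 0"
      using T1[OF sI, of V'] d by auto
    have hp: "\<forall>k\<in>?I. h k = h 1 / bt 1 * bt k" by (rule proportional[OF D1 relb bt1 h(1)])
    have "h 1 / bt 1 * bt s = 0" using hp[rule_format, OF sI] h(2) by simp
    moreover have "bt s \<noteq> 0" using bpos[rule_format, OF s] s by (simp add: bt_def)
    ultimately have "h 1 = 0" using bt1 by simp
    then show False using hp[rule_format, OF h(3)] h(4) by simp
  qed
  have zs: "\<forall>s\<in>{p+1..?D+1}. Delta V' s = 0"
  proof
    fix s assume s: "s \<in> {p+1..?D+1}"
    have sI: "s \<in> ?I" using s p by auto
    have "bt s = 0" using s by (auto simp: bt_def)
    then have "\<exists>g. rel V' g \<and> g s = 0 \<and> (\<exists>k\<in>?I. g k \<noteq> 0)"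
      using relb bt1 by (intro exI[of _ bt]) auto
    then show "Delta V' s = 0" using T1[OF sI, of V'] by simp
  qed
  have alt: "\<forall>s\<in>{1..p-1}. sgn (Delta V' s) = - sgn (Delta V' (s+1))"
  proof
    fix s assume s: "s \<in> {1..p-1}"
    have sD: "s \<in> {1..?D}" using s p by auto
    have eq: "bt s * Delta V' (s+1) + bt (s+1) * Delta V' s = 0" by (rule T2[OF sD relb])
    have "bt s > 0" "bt (s+1) > 0" using s bpos by (auto simp: bt_def)
    moreover have "Delta V' s \<noteq> 0" "Delta V' (s+1) \<noteq> 0" using nz s by auto
    ultimately show "sgn (Delta V' s) = - sgn (Delta V' (s+1))" using sign_lemma2[OF _ _ _ _ eq] by blast
  qed
  show ?thesis using V'1 V'Z nz alt zs by blast
qed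

theorem proposition1:
  fixes A :: "(real^'n) set"
    and K :: "'y::banach set"
    and f :: "real^'n \<Rightarrow> 'w::t2_space \<Rightarrow> real"
    and gradf :: "real^'n \<Rightarrow> 'w \<Rightarrow> real^'n"
    and G :: "real^'n \<Rightarrow> 'y"
    and DG :: "real^'n \<Rightarrow> ((real^'n) \<Rightarrow>\<^sub>L 'y)"
    and Z eta nA :: "(real^'n) set"
    and xs :: "real^'n"
    and p :: nat
  assumes A_ne: "A \<noteq> {}" and A_closed: "closed A" and A_convex: "convex A"
    and K_ne: "K \<noteq> {}" and K_closed: "closed K" and K_convex: "convex K" and K_cone: "cone K"
    and W_compact: "compact (UNIV :: 'w set)"
    and f_deriv: "\<And>x \<omega>. ((\<lambda>z. f z \<omega>) has_derivative (\<lambda>h. gradf x \<omega> \<bullet> h)) (at x)"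
    and f_cont: "continuous_on UNIV (\<lambda>(x, \<omega>). f x \<omega>)"
    and gradf_cont: "continuous_on UNIV (\<lambda>(x, \<omega>). gradf x \<omega>)"
    and G_deriv: "\<And>x. (G has_derivative blinfun_apply (DG x)) (at x)"
    and DG_cont: "continuous_on UNIV DG"
    and Z_indep: "independent Z" and Z_card: "card Z = CARD('n)"
    and feasible: "G xs \<in> K" "xs \<in> A"
    and eta_sub: "eta \<subseteq> constraint_normals G DG K xs"
    and eta_hull: "convex_conic_hull eta = constraint_normals G DG K xs"
    and nA_sub: "nA \<subseteq> normal_cone_cvx A xs"
    and nA_hull: "convex_conic_hull nA = normal_cone_cvx A xs"
    and p_range: "p \<in> {1..CARD('n) + 1}"
  shows
    "(alternance_exists ((\<lambda>\<omega>. gradf xs \<omega>) ` active_set f xs) eta nA Z p \<longleftrightarrow>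
       (\<exists>k0 i0 V. k0 \<in> {1..p} \<and> i0 \<in> {k0..p} \<and>
          (\<forall>i\<in>{1..k0}. V i \<in> (\<lambda>\<omega>. gradf xs \<omega>) ` active_set f xs) \<and>
          (\<forall>i\<in>{k0+1..i0}. V i \<in> eta) \<and>
          (\<forall>i\<in>{i0+1..p}. V i \<in> nA) \<and>
          dim (span (V ` {1..p})) = p - 1 \<and>
          (\<exists>\<beta>. (\<forall>i\<in>{1..p}. \<beta> i > 0) \<and> (\<Sum>i=1..p. \<beta> i *\<^sub>R V i) = 0)))
     \<and>
     (\<forall>k0 i0 V. k0 \<in> {1..p} \<and> i0 \<in> {k0..p} \<and>
          (\<forall>i\<in>{1..k0}. V i \<in> (\<lambda>\<omega>. gradf xs \<omega>) ` active_set f xs) \<and>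
          (\<forall>i\<in>{k0+1..i0}. V i \<in> eta) \<and>
          (\<forall>i\<in>{i0+1..p}. V i \<in> nA) \<longrightarrow>
        (is_alternance ((\<lambda>\<omega>. gradf xs \<omega>) ` active_set f xs) eta nA Z p V \<longleftrightarrow>
          dim (span (V ` {1..p})) = p - 1 \<and>
          (\<exists>\<beta>. (\<forall>i\<in>{1..p}. \<beta> i > 0) \<and> (\<Sum>i=1..p. \<beta> i *\<^sub>R V i) = 0)))"
proof -
  let ?G = "(\<lambda>\<omega>. gradf xs \<omega>) ` active_set f xs"
  let ?D = "CARD('n)"
  have second: "\<forall>k0 i0 V. k0 \<in> {1..p} \<and> i0 \<in> {k0..p} \<and>
          (\<forall>i\<in>{1..k0}. V i \<in> ?G) \<and>
          (\<forall>i\<in>{k0+1..i0}. V i \<in> eta) \<and>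
          (\<forall>i\<in>{i0+1..p}. V i \<in> nA) \<longrightarrow>
        (is_alternance ?G eta nA Z p V \<longleftrightarrow>
          dim (span (V ` {1..p})) = p - 1 \<and>
          (\<exists>\<beta>. (\<forall>i\<in>{1..p}. \<beta> i > 0) \<and> (\<Sum>i=1..p. \<beta> i *\<^sub>R V i) = 0))"
  proof (intro allI impI)
    fix k0 i0 V
    assume H: "k0 \<in> {1..p} \<and> i0 \<in> {k0..p} \<and> (\<forall>i\<in>{1..k0}. V i \<in> ?G) \<and>
      (\<forall>i\<in>{k0+1..i0}. V i \<in> eta) \<and> (\<forall>i\<in>{i0+1..p}. V i \<in> nA)"
    show "is_alternance ?G eta nA Z p V \<longleftrightarrow> dim (span (V ` {1..p})) = p - 1 \<and>
      (\<exists>\<beta>. (\<forall>i\<in>{1..p}. \<beta> i > 0) \<and> (\<Sum>i=1..p. \<beta> i *\<^sub>R V i) = 0)"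
    proof
      assume "is_alternance ?G eta nA Z p V"
      then obtain k0' i0' V' where eqV: "\<forall>i\<in>{1..p}. V' i = V i"
        and ad: "alternance_data ?G eta nA Z p k0' i0' V'"
        unfolding is_alternance_def by blast
      have R: "dim (span (V' ` {1..p})) = p - 1 \<and>
          (\<exists>\<beta>. (\<forall>i\<in>{1..p}. \<beta> i > 0) \<and> (\<Sum>i=1..p. \<beta> i *\<^sub>R V' i) = 0)"
        using ad unfolding alternance_data_def by (intro fwd[OF p_range]) blast+
      have im: "V' ` {1..p} = V ` {1..p}" using eqV by (intro image_cong) auto
      have sm: "(\<Sum>i=1..p. \<beta> i *\<^sub>R V' i) = (\<Sum>i=1..p. \<beta> i *\<^sub>R V i)" for \<beta>
        using eqV by (intro sum.cong) auto
      show "dim (span (V ` {1..p})) = p - 1 \<and>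
          (\<exists>\<beta>. (\<forall>i\<in>{1..p}. \<beta> i > 0) \<and> (\<Sum>i=1..p. \<beta> i *\<^sub>R V i) = 0)"
        using R unfolding im sm .
    next
      assume R: "dim (span (V ` {1..p})) = p - 1 \<and>
        (\<exists>\<beta>. (\<forall>i\<in>{1..p}. \<beta> i > 0) \<and> (\<Sum>i=1..p. \<beta> i *\<^sub>R V i) = 0)"
      then obtain \<beta> where b: "\<forall>i\<in>{1..p}. \<beta> i > 0" "(\<Sum>i=1..p. \<beta> i *\<^sub>R V i) = 0" by blast
      obtain V' where V': "\<forall>i\<in>{1..p}. V' i = V i" "\<forall>i\<in>{p+1..?D+1}. V' i \<in> Z"
        "\<forall>s\<in>{1..p}. Delta V' s \<noteq> 0"
        "\<forall>s\<in>{1..p-1}. sgn (Delta V' s) = - sgn (Delta V' (s+1))"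
        "\<forall>s\<in>{p+1..?D+1}. Delta V' s = 0"
        using bwd[OF p_range Z_indep Z_card _ b(1) b(2)] R by blast
      have k0: "k0 \<in> {1..p}" and i0: "i0 \<in> {k0..p}" using H by blast+
      have c1: "\<forall>i\<in>{1..k0}. V' i \<in> ?G"
      proof
        fix i assume "i \<in> {1..k0}"
        then have "i \<in> {1..p}" "V i \<in> ?G" using H k0 by auto
        then show "V' i \<in> ?G" using V'(1) by simp
      qed
      have c2: "\<forall>i\<in>{k0+1..i0}. V' i \<in> eta"
      proof
        fix i assume "i \<in> {k0+1..i0}"
        then have "i \<in> {1..p}" "V i \<in> eta" using H k0 i0 by auto
        then show "V' i \<in> eta" using V'(1) by simp
      qed
      have c3: "\<forall>i\<in>{i0+1..p}. V' i \<in> nA"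
      proof
        fix i assume "i \<in> {i0+1..p}"
        then have "i \<in> {1..p}" "V i \<in> nA" using H k0 i0 by auto
        then show "V' i \<in> nA" using V'(1) by simp
      qed
      have "alternance_data ?G eta nA Z p k0 i0 V'"
        unfolding alternance_data_def using k0 i0 c1 c2 c3 V'(2-5) by blast
      then show "is_alternance ?G eta nA Z p V" unfolding is_alternance_def using V'(1) by blast
    qed
  qed
  have first: "alternance_exists ?G eta nA Z p \<longleftrightarrow>
       (\<exists>k0 i0 V. k0 \<in> {1..p} \<and> i0 \<in> {k0..p} \<and>
          (\<forall>i\<in>{1..k0}. V i \<in> ?G) \<and>
          (\<forall>i\<in>{k0+1..i0}. V i \<in> eta) \<and>
          (\<forall>i\<in>{i0+1..p}. V i \<in> nA) \<and>
          dim (span (V ` {1..p})) = p - 1 \<and>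
          (\<exists>\<beta>. (\<forall>i\<in>{1..p}. \<beta> i > 0) \<and> (\<Sum>i=1..p. \<beta> i *\<^sub>R V i) = 0))"
  proof
    assume "alternance_exists ?G eta nA Z p"
    then obtain k0 i0 V where ad: "alternance_data ?G eta nA Z p k0 i0 V"
      unfolding alternance_exists_def by blast
    have R: "dim (span (V ` {1..p})) = p - 1 \<and>
        (\<exists>\<beta>. (\<forall>i\<in>{1..p}. \<beta> i > 0) \<and> (\<Sum>i=1..p. \<beta> i *\<^sub>R V i) = 0)"
      using ad unfolding alternance_data_def by (intro fwd[OF p_range]) blast+
    have C: "k0 \<in> {1..p} \<and> i0 \<in> {k0..p} \<and> (\<forall>i\<in>{1..k0}. V i \<in> ?G) \<and>
      (\<forall>i\<in>{k0+1..i0}. V i \<in> eta) \<and> (\<forall>i\<in>{i0+1..p}. V i \<in> nA)"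
      using ad unfolding alternance_data_def by blast
    show "\<exists>k0 i0 V. k0 \<in> {1..p} \<and> i0 \<in> {k0..p} \<and>
          (\<forall>i\<in>{1..k0}. V i \<in> ?G) \<and>
          (\<forall>i\<in>{k0+1..i0}. V i \<in> eta) \<and>
          (\<forall>i\<in>{i0+1..p}. V i \<in> nA) \<and>
          dim (span (V ` {1..p})) = p - 1 \<and>
          (\<exists>\<beta>. (\<forall>i\<in>{1..p}. \<beta> i > 0) \<and> (\<Sum>i=1..p. \<beta> i *\<^sub>R V i) = 0)"
      using C R by blast
  next
    assume "\<exists>k0 i0 V. k0 \<in> {1..p} \<and> i0 \<in> {k0..p} \<and>
          (\<forall>i\<in>{1..k0}. V i \<in> ?G) \<and>
          (\<forall>i\<in>{k0+1..i0}. V i \<in> eta) \<and>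
          (\<forall>i\<in>{i0+1..p}. V i \<in> nA) \<and>
          dim (span (V ` {1..p})) = p - 1 \<and>
          (\<exists>\<beta>. (\<forall>i\<in>{1..p}. \<beta> i > 0) \<and> (\<Sum>i=1..p. \<beta> i *\<^sub>R V i) = 0)"
    then obtain k0 i0 V where C: "k0 \<in> {1..p} \<and> i0 \<in> {k0..p} \<and> (\<forall>i\<in>{1..k0}. V i \<in> ?G) \<and>
      (\<forall>i\<in>{k0+1..i0}. V i \<in> eta) \<and> (\<forall>i\<in>{i0+1..p}. V i \<in> nA)"
      and R: "dim (span (V ` {1..p})) = p - 1 \<and>
        (\<exists>\<beta>. (\<forall>i\<in>{1..p}. \<beta> i > 0) \<and> (\<Sum>i=1..p. \<beta> i *\<^sub>R V i) = 0)"
      by blast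
    have "is_alternance ?G eta nA Z p V" using spec[OF spec[OF spec[OF second, of k0], of i0], of V] C R by blast
    then show "alternance_exists ?G eta nA Z p"
      unfolding is_alternance_def alternance_exists_def by blast
  qed
  show ?thesis using first second by (intro conjI)
qed

end
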